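(* Let $C=\mathbb{C}\langle x,y,z\rangle/(x^2,y^2,z^2,[\{x,y\},z],[\{y,z\},x])$, let $\lambda$ be a primitive $n$th root of unity, and let $\mathbb{Z}_n=\langle\sigma\rangle$ act on $C$ by $\sigma(x)=\lambda^{-1}x$, $\sigma(y)=y$, $\sigma(z)=\lambda z$. In the smash product $C\#\mathbb{Z}_n$ put $x'=x\#1$ and $z'=z\#\sigma^{-1}$. Then $(x'z'+z'x')^n$ belongs to the center of $C\#\mathbb{Z}_n$.
   Context: $\{a,b\}=ab+ba$, $[a,b]=ab-ba$. The smash product $C\#\mathbb{Z}_n$ is $C\otimes\mathbb{C}\mathbb{Z}_n$ with multiplication $(a\#\sigma^i)(b\#\sigma^j)=a\,\sigma^i(b)\#\sigma^{i+j}$. *)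

theory Defs
  imports Complex_Main
begin

text \<open>Free algebra C<x,y,z>: noncommutative polynomials, represented as
  finitely supported coefficient functions on words over the alphabet {X,Y,Z}.\<close>

datatype gen = X | Y | Z

type_synonym ncpoly = "gen list \<Rightarrow> complex"

definition is_ncpoly :: "ncpoly \<Rightarrow> bool" where
  "is_ncpoly p \<longleftrightarrow> finite {w. p w \<noteq> 0}"

definition ncp_zero :: ncpoly where "ncp_zero = (\<lambda>w. 0)"
definition ncp_one :: ncpoly where "ncp_one = (\<lambda>w. if w = [] then 1 else 0)"
definition ncp_var :: "gen \<Rightarrow> ncpoly" where "ncp_var g = (\<lambda>w. if w = [g] then 1 else 0)"
definition ncp_add :: "ncpoly \<Rightarrow> ncpoly \<Rightarrow> ncpoly" where "ncp_add p q = (\<lambda>w. p w + q w)"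
definition ncp_diff :: "ncpoly \<Rightarrow> ncpoly \<Rightarrow> ncpoly" where "ncp_diff p q = (\<lambda>w. p w - q w)"

definition ncp_mul :: "ncpoly \<Rightarrow> ncpoly \<Rightarrow> ncpoly" where
  "ncp_mul p q = (\<lambda>w. \<Sum>k\<le>length w. p (take k w) * q (drop k w))"

definition anticomm :: "ncpoly \<Rightarrow> ncpoly \<Rightarrow> ncpoly" where
  "anticomm a b = ncp_add (ncp_mul a b) (ncp_mul b a)"
definition comm :: "ncpoly \<Rightarrow> ncpoly \<Rightarrow> ncpoly" where
  "comm a b = ncp_diff (ncp_mul a b) (ncp_mul b a)"

definition C_rels :: "ncpoly set" where
  "C_rels = {ncp_mul (ncp_var X) (ncp_var X), ncp_mul (ncp_var Y) (ncp_var Y),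
             ncp_mul (ncp_var Z) (ncp_var Z),
             comm (anticomm (ncp_var X) (ncp_var Y)) (ncp_var Z),
             comm (anticomm (ncp_var Y) (ncp_var Z)) (ncp_var X)}"

inductive_set C_ideal :: "ncpoly set" where
  gen: "r \<in> C_rels \<Longrightarrow> r \<in> C_ideal"
| zero: "ncp_zero \<in> C_ideal"
| add: "a \<in> C_ideal \<Longrightarrow> b \<in> C_ideal \<Longrightarrow> ncp_add a b \<in> C_ideal"
| lmul: "a \<in> C_ideal \<Longrightarrow> is_ncpoly p \<Longrightarrow> ncp_mul p a \<in> C_ideal"
| rmul: "a \<in> C_ideal \<Longrightarrow> is_ncpoly p \<Longrightarrow> ncp_mul a p \<in> C_ideal"

text \<open>sigma^i acting on representatives: x |-> lam^-1 x, y |-> y, z |-> lam z.\<close>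
definition sigma_pow :: "complex \<Rightarrow> nat \<Rightarrow> ncpoly \<Rightarrow> ncpoly" where
  "sigma_pow lam i p = (\<lambda>w. lam powi (int i * (int (count_list w Z) - int (count_list w X))) * p w)"

text \<open>Smash product C # Z_n: an element sum_k a_k # sigma^k is represented by the
  family k |-> a_k (representatives in C<x,y,z>), with a_k = 0 for k >= n.\<close>
type_synonym smash = "nat \<Rightarrow> ncpoly"

definition sm_elem :: "nat \<Rightarrow> smash \<Rightarrow> bool" where
  "sm_elem n P \<longleftrightarrow> (\<forall>k. is_ncpoly (P k)) \<and> (\<forall>k\<ge>n. P k = ncp_zero)"

definition sm_add :: "smash \<Rightarrow> smash \<Rightarrow> smash" where
  "sm_add P Q = (\<lambda>k. ncp_add (P k) (Q k))"

definition sm_mul :: "nat \<Rightarrow> complex \<Rightarrow> smash \<Rightarrow> smash \<Rightarrow> smash" where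
  "sm_mul n lam P Q = (\<lambda>k. if k < n then
      (\<lambda>w. \<Sum>i<n. \<Sum>j\<in>{j. j < n \<and> (i + j) mod n = k}.
              ncp_mul (P i) (sigma_pow lam i (Q j)) w)
    else ncp_zero)"

definition sm_one :: smash where
  "sm_one = (\<lambda>k. if k = 0 then ncp_one else ncp_zero)"

primrec sm_pow :: "nat \<Rightarrow> complex \<Rightarrow> smash \<Rightarrow> nat \<Rightarrow> smash" where
  "sm_pow n lam P 0 = sm_one"
| "sm_pow n lam P (Suc m) = sm_mul n lam (sm_pow n lam P m) P"

text \<open>Equality in C # Z_n (= C/I tensor CZ_n): componentwise congruence modulo the ideal.\<close>
definition sm_eq :: "nat \<Rightarrow> smash \<Rightarrow> smash \<Rightarrow> bool" where
  "sm_eq n P Q \<longleftrightarrow> (\<forall>k<n. ncp_diff (P k) (Q k) \<in> C_ideal)"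

definition sm_center :: "nat \<Rightarrow> complex \<Rightarrow> smash \<Rightarrow> bool" where
  "sm_center n lam W \<longleftrightarrow> (\<forall>Q. sm_elem n Q \<longrightarrow> sm_eq n (sm_mul n lam W Q) (sm_mul n lam Q W))"

definition x' :: smash where
  "x' = (\<lambda>k. if k = 0 then ncp_var X else ncp_zero)"

text \<open>z' = z # sigma^{-1} = z # sigma^{n-1}.\<close>
definition z' :: "nat \<Rightarrow> smash" where
  "z' n = (\<lambda>k. if k = n - 1 then ncp_var Z else ncp_zero)"

end

theory Submission imports Defs begin

lemma mul_Nil[simp]: "ncp_mul p q [] = p [] * q []" by (simp add: ncp_mul_def)
lemma mul_Cons: "ncp_mul p q (a#w) = p [] * q (a#w) + ncp_mul (\<lambda>v. p (a#v)) q w"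
  unfolding ncp_mul_def length_Cons sum.atMost_Suc_shift by simp

lemma mul_add_left: "ncp_mul (\<lambda>v. f v + g v) r w = ncp_mul f r w + ncp_mul g r w"
  unfolding ncp_mul_def by (simp add: sum.distrib algebra_simps)
lemma mul_add_right: "ncp_mul r (\<lambda>v. f v + g v) w = ncp_mul r f w + ncp_mul r g w"
  unfolding ncp_mul_def by (simp add: sum.distrib algebra_simps)
lemma mul_scal_left: "ncp_mul (\<lambda>v. c * f v) r w = c * ncp_mul f r w"
  unfolding ncp_mul_def by (simp add: sum_distrib_left algebra_simps)
lemma mul_scal_right: "ncp_mul r (\<lambda>v. c * f v) w = c * ncp_mul r f w"
  unfolding ncp_mul_def by (simp add: sum_distrib_left algebra_simps)
lemma mul_zero_left[simp]: "ncp_mul (\<lambda>v. 0) r w = 0"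
  unfolding ncp_mul_def by simp
lemma mul_zero_right[simp]: "ncp_mul r (\<lambda>v. 0) w = 0"
  unfolding ncp_mul_def by simp

lemma mul_assoc: "ncp_mul (ncp_mul p q) r w = ncp_mul p (ncp_mul q r) w"
proof (induction w arbitrary: p q r)
  case Nil then show ?case by simp
next
  case (Cons a w)
  have sh: "(\<lambda>v. ncp_mul p q (a#v)) = (\<lambda>v. p [] * q (a#v) + ncp_mul (\<lambda>v. p (a#v)) q v)"
    by (simp add: mul_Cons)
  show ?case
    apply (subst mul_Cons)
    apply (subst (2) mul_Cons)
    apply (subst mul_Cons)
    unfolding sh mul_add_left mul_scal_left Cons.IH
    by (simp add: algebra_simps mul_Cons)
qed

lemma mul_one_left: "ncp_mul ncp_one q w = q w"
  by (cases w) (simp_all add: mul_Cons ncp_one_def)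
lemma mul_one_right: "ncp_mul p ncp_one w = p w"
proof (induction w arbitrary: p)
  case Nil then show ?case by (simp add: ncp_one_def)
next
  case (Cons a w) then show ?case by (simp add: mul_Cons ncp_one_def)
qed


lemma mul_ne0: "ncp_mul p q w \<noteq> 0 \<Longrightarrow> \<exists>k. p (take k w) \<noteq> 0 \<and> q (drop k w) \<noteq> 0"
  unfolding ncp_mul_def by (metis (mono_tags, lifting) mult_eq_0_iff sum.neutral)

lemma fin_mul: "is_ncpoly p \<Longrightarrow> is_ncpoly q \<Longrightarrow> is_ncpoly (ncp_mul p q)"
proof -
  assume p: "is_ncpoly p" and q: "is_ncpoly q"
  have "{w. ncp_mul p q w \<noteq> 0} \<subseteq> (\<lambda>(a,b). a @ b) ` ({w. p w \<noteq> 0} \<times> {w. q w \<noteq> 0})"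
  proof
    fix w assume "w \<in> {w. ncp_mul p q w \<noteq> 0}"
    then obtain k where "p (take k w) \<noteq> 0" "q (drop k w) \<noteq> 0" using mul_ne0 by blast
    then show "w \<in> (\<lambda>(a,b). a @ b) ` ({w. p w \<noteq> 0} \<times> {w. q w \<noteq> 0})"
      by (intro image_eqI[of _ _ "(take k w, drop k w)"]) auto
  qed
  then show ?thesis using p q unfolding is_ncpoly_def by (meson finite_SigmaI finite_imageI finite_subset)
qed

lemma fin_add: "is_ncpoly p \<Longrightarrow> is_ncpoly q \<Longrightarrow> is_ncpoly (\<lambda>w. p w + q w)"
  unfolding is_ncpoly_def
  by (rule finite_subset[of _ "{w. p w \<noteq> 0} \<union> {w. q w \<noteq> 0}"]) auto
lemma fin_scal: "is_ncpoly p \<Longrightarrow> is_ncpoly (\<lambda>w. c * p w)"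
  unfolding is_ncpoly_def by (rule finite_subset[of _ "{w. p w \<noteq> 0}"]) auto
lemma fin_zero[simp]: "is_ncpoly (\<lambda>w. 0)" unfolding is_ncpoly_def by simp
lemma fin_one: "is_ncpoly ncp_one" unfolding is_ncpoly_def ncp_one_def
  by (rule finite_subset[of _ "{[]}"]) auto
lemma fin_var: "is_ncpoly (ncp_var g)" unfolding is_ncpoly_def ncp_var_def
  by (rule finite_subset[of _ "{[g]}"]) auto

definition cst :: "complex \<Rightarrow> ncpoly" where "cst c = (\<lambda>w. if w = [] then c else 0)"
lemma fin_cst: "is_ncpoly (cst c)" unfolding is_ncpoly_def cst_def
  by (rule finite_subset[of _ "{[]}"]) auto
lemma mul_cst_left: "ncp_mul (cst c) q = (\<lambda>w. c * q w)"
  by (rule ext, case_tac w) (simp_all add: mul_Cons cst_def)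
lemma mul_cst_right: "ncp_mul p (cst c) w = p w * c"
proof (induction w arbitrary: p)
  case Nil then show ?case by (simp add: cst_def)
next
  case (Cons a w) then show ?case by (simp add: mul_Cons cst_def)
qed

lemma I_scal: "a \<in> C_ideal \<Longrightarrow> (\<lambda>w. c * a w) \<in> C_ideal"
  using C_ideal.lmul[of a "cst c"] fin_cst mul_cst_left by metis
lemma I_add: "a \<in> C_ideal \<Longrightarrow> b \<in> C_ideal \<Longrightarrow> (\<lambda>w. a w + b w) \<in> C_ideal"
  using C_ideal.add unfolding ncp_add_def by blast
lemma I_diff: "a \<in> C_ideal \<Longrightarrow> b \<in> C_ideal \<Longrightarrow> ncp_diff a b \<in> C_ideal"
proof -
  assume a: "a \<in> C_ideal" and b: "b \<in> C_ideal"
  have "ncp_diff a b = (\<lambda>w. a w + (\<lambda>w. (-1) * b w) w)" unfolding ncp_diff_def by auto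
  then show ?thesis using I_add[OF a I_scal[OF b, of "-1"]] by simp
qed
lemma I_zero: "(\<lambda>w. 0) \<in> C_ideal" using C_ideal.zero unfolding ncp_zero_def .
lemma I_lmul: "a \<in> C_ideal \<Longrightarrow> is_ncpoly p \<Longrightarrow> ncp_mul p a \<in> C_ideal" by (rule C_ideal.lmul)
lemma I_rmul: "a \<in> C_ideal \<Longrightarrow> is_ncpoly p \<Longrightarrow> ncp_mul a p \<in> C_ideal" by (rule C_ideal.rmul)

definition Req :: "ncpoly \<Rightarrow> ncpoly \<Rightarrow> bool" where
  "Req p q \<longleftrightarrow> is_ncpoly p \<and> is_ncpoly q \<and> ncp_diff p q \<in> C_ideal"

lemma Req_refl: "is_ncpoly p \<Longrightarrow> Req p p"
  unfolding Req_def ncp_diff_def using I_zero by simp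
lemma Req_eqI: "is_ncpoly p \<Longrightarrow> q = p \<Longrightarrow> Req p q" using Req_refl by simp

quotient_type cq = ncpoly / partial: Req
proof (rule part_equivpI)
  show "\<exists>x. Req x x" using Req_refl fin_zero by blast
  show "symp Req"
  proof (rule sympI)
    fix a b assume "Req a b"
    then show "Req b a" unfolding Req_def
      using I_scal[of "ncp_diff a b" "-1"] by (simp add: ncp_diff_def)
  qed
  show "transp Req"
  proof (rule transpI)
    fix a b c assume "Req a b" "Req b c"
    then show "Req a c" unfolding Req_def
      using I_add[of "ncp_diff a b" "ncp_diff b c"] by (simp add: ncp_diff_def)
  qed
qed


lemma Req_fin1: "Req p q \<Longrightarrow> is_ncpoly p" and Req_fin2: "Req p q \<Longrightarrow> is_ncpoly q"
  unfolding Req_def by auto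

lemma mul_diff_left: "ncp_mul (\<lambda>v. f v - g v) r w = ncp_mul f r w - ncp_mul g r w"
  unfolding ncp_mul_def by (simp add: sum_subtractf algebra_simps)
lemma mul_diff_right: "ncp_mul r (\<lambda>v. f v - g v) w = ncp_mul r f w - ncp_mul r g w"
  unfolding ncp_mul_def by (simp add: sum_subtractf algebra_simps)

lemma I_cong: "a \<in> C_ideal \<Longrightarrow> b = a \<Longrightarrow> b \<in> C_ideal" by simp

lemma fin_diff: "is_ncpoly p \<Longrightarrow> is_ncpoly q \<Longrightarrow> is_ncpoly (\<lambda>w. p w - q w)"
proof -
  assume "is_ncpoly p" "is_ncpoly q"
  then have "is_ncpoly (\<lambda>w. p w + (\<lambda>w. (-1) * q w) w)" by (intro fin_add fin_scal)
  then show "is_ncpoly (\<lambda>w. p w - q w)" by simp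
qed

lemma I_nil: "a \<in> C_ideal \<Longrightarrow> a [] = 0"
  by (induction rule: C_ideal.induct)
     (auto simp: C_rels_def ncp_var_def anticomm_def comm_def ncp_add_def ncp_diff_def ncp_zero_def)

instantiation cq :: ring_1
begin
lift_definition zero_cq :: cq is "\<lambda>w. 0" by (rule Req_refl) simp
lift_definition one_cq :: cq is ncp_one by (rule Req_refl, rule fin_one)
lift_definition plus_cq :: "cq \<Rightarrow> cq \<Rightarrow> cq" is "\<lambda>p q w. p w + q w"
proof -
  fix p p' q q' assume a: "Req p p'" "Req q q'"
  then show "Req (\<lambda>w. p w + q w) (\<lambda>w. p' w + q' w)" unfolding Req_def
    apply (simp add: fin_add)
    apply (rule I_cong[OF I_add[of "ncp_diff p p'" "ncp_diff q q'"]])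
    by (auto simp: ncp_diff_def)
qed
lift_definition uminus_cq :: "cq \<Rightarrow> cq" is "\<lambda>p w. - p w"
proof -
  fix p p' assume a: "Req p p'"
  then show "Req (\<lambda>w. - p w) (\<lambda>w. - p' w)" unfolding Req_def
    using fin_scal[of _ "-1"] apply simp
    apply (rule I_cong[OF I_scal[of "ncp_diff p p'" "-1"]])
    by (auto simp: ncp_diff_def)
qed
lift_definition minus_cq :: "cq \<Rightarrow> cq \<Rightarrow> cq" is "\<lambda>p q w. p w - q w"
proof -
  fix p p' q q' assume a: "Req p p'" "Req q q'"
  have f: "\<And>p q. is_ncpoly p \<Longrightarrow> is_ncpoly q \<Longrightarrow> is_ncpoly (\<lambda>w. p w - q w)"
  proof -
    fix p q :: ncpoly assume "is_ncpoly p" "is_ncpoly q"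
    then have "is_ncpoly (\<lambda>w. p w + (\<lambda>w. (-1) * q w) w)" by (intro fin_add fin_scal)
    then show "is_ncpoly (\<lambda>w. p w - q w)" by simp
  qed
  from a show "Req (\<lambda>w. p w - q w) (\<lambda>w. p' w - q' w)" unfolding Req_def
    apply (simp add: f)
    apply (rule I_cong[OF I_diff[of "ncp_diff p p'" "ncp_diff q q'"]])
    by (auto simp: ncp_diff_def)
qed
lift_definition times_cq :: "cq \<Rightarrow> cq \<Rightarrow> cq" is ncp_mul
proof -
  fix p p' q q' assume a: "Req p p'" "Req q q'"
  have e: "ncp_diff (ncp_mul p q) (ncp_mul p' q') =
     (\<lambda>w. ncp_mul (ncp_diff p p') q w + ncp_mul p' (ncp_diff q q') w)"
    apply (rule ext)
    apply (simp only: ncp_diff_def mul_diff_left mul_diff_right)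
    by simp
  have "ncp_diff (ncp_mul p q) (ncp_mul p' q') \<in> C_ideal"
    unfolding e using a unfolding Req_def by (intro I_add I_rmul I_lmul) auto
  then show "Req (ncp_mul p q) (ncp_mul p' q')" using a unfolding Req_def by (simp add: fin_mul)
qed
instance
proof
  fix a b c :: cq
  show "a + b + c = a + (b + c)" by transfer (auto dest: Req_fin1 intro!: Req_refl fin_add simp: algebra_simps)
  show "a + b = b + a" by transfer (auto dest: Req_fin1 intro!: Req_refl fin_add simp: algebra_simps)
  show "0 + a = a" by transfer (auto dest: Req_fin1 intro!: Req_refl)
  show "- a + a = 0" by transfer (auto dest: Req_fin1 intro!: Req_refl)
  show "a - b = a + - b" by transfer (auto dest: Req_fin1 intro!: Req_refl fin_diff)
  show "a * b * c = a * (b * c)" by transfer (auto dest: Req_fin1 intro!: Req_eqI ext fin_one fin_mul simp: mul_assoc)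
  show "1 * a = a" by transfer (auto dest: Req_fin1 intro!: Req_eqI ext fin_one fin_mul simp: mul_one_left)
  show "a * 1 = a" by transfer (auto dest: Req_fin1 intro!: Req_eqI ext fin_one fin_mul simp: mul_one_right)
  show "(a + b) * c = a * c + b * c" by transfer (auto dest: Req_fin1 intro!: Req_eqI ext fin_one fin_mul fin_add simp: mul_add_left)
  show "a * (b + c) = a * b + a * c" by transfer (auto dest: Req_fin1 intro!: Req_eqI ext fin_one fin_mul fin_add simp: mul_add_right)
  show "(0::cq) \<noteq> 1" apply transfer
    by (auto simp: Req_def ncp_diff_def ncp_one_def dest!: I_nil)
qed
end


lemma Req_fin_refl: "is_ncpoly p \<Longrightarrow> Req p p" by (rule Req_refl)

lemma A_mul: "is_ncpoly p \<Longrightarrow> is_ncpoly q \<Longrightarrow> abs_cq (ncp_mul p q) = abs_cq p * abs_cq q"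
  using times_cq.abs_eq Req_refl by metis
lemma A_add: "is_ncpoly p \<Longrightarrow> is_ncpoly q \<Longrightarrow> abs_cq (\<lambda>w. p w + q w) = abs_cq p + abs_cq q"
  using plus_cq.abs_eq Req_refl by metis
lemma A_diff: "is_ncpoly p \<Longrightarrow> is_ncpoly q \<Longrightarrow> abs_cq (\<lambda>w. p w - q w) = abs_cq p - abs_cq q"
  using minus_cq.abs_eq Req_refl by metis
lemma A_eq_iff: "is_ncpoly p \<Longrightarrow> is_ncpoly q \<Longrightarrow> (abs_cq p = abs_cq q \<longleftrightarrow> ncp_diff p q \<in> C_ideal)"
  using Quotient3_rel[OF Quotient3_cq, of p q] Req_refl unfolding Req_def by blast
lemma A_surj: "\<exists>q. is_ncpoly q \<and> t = abs_cq q"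
  using Quotient3_abs_rep[OF Quotient3_cq, of t] Quotient3_rep_reflp[OF Quotient3_cq, of t]
  unfolding Req_def by metis
lemma A_zero: "abs_cq (\<lambda>w. 0) = 0" using zero_cq.abs_eq by simp
lemma A_ideal: "r \<in> C_ideal \<Longrightarrow> is_ncpoly r \<Longrightarrow> abs_cq r = 0"
  using A_eq_iff[of r "\<lambda>w. 0"] A_zero by (simp add: ncp_diff_def)

definition cc :: "complex \<Rightarrow> cq" where "cc c = abs_cq (cst c)"
lemma cst_mul: "ncp_mul (cst a) (cst b) = cst (a * b)"
  unfolding mul_cst_left by (rule ext) (simp add: cst_def)
lemma cc_mult: "cc a * cc b = cc (a * b)"
  unfolding cc_def using A_mul[OF fin_cst fin_cst] cst_mul by metis
lemma cc_one: "cc 1 = 1"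
proof -
  have "cst 1 = ncp_one" by (rule ext) (simp add: cst_def ncp_one_def)
  then show ?thesis unfolding cc_def using one_cq.abs_eq by simp
qed
lemma cc_pow: "cc a ^ m = cc (a ^ m)"
  by (induction m) (simp_all add: cc_one cc_mult)
lemma cc_comm: "cc c * t = t * cc c"
proof -
  obtain q where q: "is_ncpoly q" "t = abs_cq q" using A_surj by blast
  have "ncp_mul (cst c) q = ncp_mul q (cst c)" by (simp add: mul_cst_left mul_cst_right fun_eq_iff)
  then show ?thesis unfolding cc_def q(2) using A_mul q(1) fin_cst by metis
qed
lemma A_scal: "is_ncpoly p \<Longrightarrow> abs_cq (\<lambda>w. c * p w) = cc c * abs_cq p"
  unfolding cc_def using A_mul[OF fin_cst, of p c] mul_cst_left by metis

definition gx :: cq where "gx = abs_cq (ncp_var X)"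
definition gy :: cq where "gy = abs_cq (ncp_var Y)"
definition gz :: cq where "gz = abs_cq (ncp_var Z)"

lemma fin_rels: "r \<in> C_rels \<Longrightarrow> is_ncpoly r"
  unfolding C_rels_def comm_def anticomm_def ncp_diff_def ncp_add_def
  by (auto intro!: fin_mul fin_var fin_add fin_diff)

lemma rel_zero: "r \<in> C_rels \<Longrightarrow> abs_cq r = 0"
  by (rule A_ideal[OF C_ideal.gen fin_rels])

lemma gxx: "gx * gx = 0"
  using rel_zero[of "ncp_mul (ncp_var X) (ncp_var X)"] A_mul[OF fin_var fin_var]
  unfolding gx_def C_rels_def by auto
lemma gzz: "gz * gz = 0"
  using rel_zero[of "ncp_mul (ncp_var Z) (ncp_var Z)"] A_mul[OF fin_var fin_var]
  unfolding gz_def C_rels_def by auto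

lemma A_anticomm: "is_ncpoly p \<Longrightarrow> is_ncpoly q \<Longrightarrow> abs_cq (anticomm p q) = abs_cq p * abs_cq q + abs_cq q * abs_cq p"
  unfolding anticomm_def ncp_add_def by (simp add: A_add A_mul fin_mul)
lemma fin_anticomm: "is_ncpoly p \<Longrightarrow> is_ncpoly q \<Longrightarrow> is_ncpoly (anticomm p q)"
  unfolding anticomm_def ncp_add_def by (simp add: fin_add fin_mul)
lemma A_comm: "is_ncpoly p \<Longrightarrow> is_ncpoly q \<Longrightarrow> abs_cq (comm p q) = abs_cq p * abs_cq q - abs_cq q * abs_cq p"
  unfolding comm_def ncp_diff_def by (simp add: A_diff A_mul fin_mul)

lemma rel4: "(gx*gy + gy*gx) * gz - gz * (gx*gy + gy*gx) = 0"
  using rel_zero[of "comm (anticomm (ncp_var X) (ncp_var Y)) (ncp_var Z)"]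
  unfolding gx_def gy_def gz_def C_rels_def
  by (simp add: A_comm A_anticomm fin_anticomm fin_var)
lemma rel5: "(gy*gz + gz*gy) * gx - gx * (gy*gz + gz*gy) = 0"
  using rel_zero[of "comm (anticomm (ncp_var Y) (ncp_var Z)) (ncp_var X)"]
  unfolding gy_def gx_def gz_def C_rels_def
  by (simp add: A_comm A_anticomm fin_anticomm fin_var)

definition ee :: cq where "ee = gx * gz + gz * gx"

lemma ee_x: "ee * gx = gx * ee"
proof -
  have a: "gx * (gx * t) = 0" for t by (metis gxx mult.assoc mult_zero_left)
  show ?thesis unfolding ee_def by (simp add: algebra_simps gxx a)
qed
lemma ee_z: "ee * gz = gz * ee"
proof -
  have a: "gz * (gz * t) = 0" for t by (metis gzz mult.assoc mult_zero_left)
  show ?thesis unfolding ee_def by (simp add: algebra_simps gzz a)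
qed
lemma ee_y: "ee * gy = gy * ee"
proof -
  have "ee * gy - gy * ee = - (((gx*gy + gy*gx) * gz - gz * (gx*gy + gy*gx)) + ((gy*gz + gz*gy) * gx - gx * (gy*gz + gz*gy)))"
    unfolding ee_def by (simp add: algebra_simps)
  then show ?thesis using rel4 rel5 by simp
qed


primrec mono :: "gen list \<Rightarrow> ncpoly" where
  "mono [] = ncp_one"
| "mono (g # w) = ncp_mul (ncp_var g) (mono w)"

lemma mul_var_left: "ncp_mul (ncp_var g) q w = (case w of [] \<Rightarrow> 0 | b # v \<Rightarrow> if b = g then q v else 0)"
proof (cases w)
  case Nil then show ?thesis by (simp add: ncp_var_def)
next
  case (Cons b v)
  have "(\<lambda>u. ncp_var g (b # u)) = (if b = g then ncp_one else (\<lambda>u. 0))"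
    by (rule ext) (auto simp: ncp_var_def ncp_one_def)
  then show ?thesis using Cons by (simp add: mul_Cons ncp_var_def mul_one_left)
qed

lemma mono_eq: "mono w = (\<lambda>v. if v = w then 1 else 0)"
proof (induction w)
  case Nil then show ?case by (simp add: ncp_one_def fun_eq_iff)
next
  case (Cons g w) then show ?case
    by (auto simp: fun_eq_iff mul_var_left split: list.splits)
qed

lemma fin_mono: "is_ncpoly (mono w)"
  by (induction w) (simp_all add: fin_one fin_mul fin_var)

lemma fin_sum: "finite S \<Longrightarrow> (\<And>s. s \<in> S \<Longrightarrow> is_ncpoly (f s)) \<Longrightarrow>
   is_ncpoly (\<lambda>v. \<Sum>s\<in>S. f s v) \<and> abs_cq (\<lambda>v. \<Sum>s\<in>S. f s v) = (\<Sum>s\<in>S. abs_cq (f s))"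
proof (induction S rule: finite_induct)
  case empty then show ?case by (simp add: A_zero)
next
  case (insert x F)
  then show ?case by (simp add: fin_add A_add)
qed

lemma poly_decomp: "is_ncpoly q \<Longrightarrow> abs_cq q = (\<Sum>w\<in>{w. q w \<noteq> 0}. cc (q w) * abs_cq (mono w))"
proof -
  assume q: "is_ncpoly q"
  let ?S = "{w. q w \<noteq> 0}"
  have fS: "finite ?S" using q unfolding is_ncpoly_def .
  have e: "q = (\<lambda>v. \<Sum>w\<in>?S. (\<lambda>u. q w * mono w u) v)"
  proof (rule ext)
    fix v
    have "(\<Sum>w\<in>?S. q w * mono w v) = (\<Sum>w\<in>?S. if w = v then q v else 0)"
      by (rule sum.cong) (auto simp: mono_eq)
    also have "\<dots> = q v" using fS by (simp add: sum.delta')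
    finally show "q v = (\<Sum>w\<in>?S. (\<lambda>u. q w * mono w u) v)" by simp
  qed
  have "abs_cq q = (\<Sum>w\<in>?S. abs_cq (\<lambda>u. q w * mono w u))"
    by (subst e, rule conjunct2[OF fin_sum[OF fS]]) (simp add: fin_scal fin_mono)
  then show ?thesis by (simp add: A_scal fin_mono)
qed

lemma ee_gen: "ee * abs_cq (ncp_var g) = abs_cq (ncp_var g) * ee"
  by (cases g) (simp_all add: ee_x ee_y ee_z flip: gx_def gy_def gz_def)

lemma ee_mono: "ee * abs_cq (mono w) = abs_cq (mono w) * ee"
proof (induction w)
  case Nil then show ?case using one_cq.abs_eq by (simp flip: one_cq.abs_eq)
next
  case (Cons g w)
  have "ee * abs_cq (mono (g # w)) = ee * abs_cq (ncp_var g) * abs_cq (mono w)"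
    by (simp add: A_mul fin_var fin_mono mult.assoc)
  also have "\<dots> = abs_cq (ncp_var g) * (ee * abs_cq (mono w))" by (simp add: ee_gen mult.assoc)
  also have "\<dots> = abs_cq (mono (g # w)) * ee" by (simp add: Cons A_mul fin_var fin_mono mult.assoc)
  finally show ?case .
qed

lemma ee_central: "ee * t = t * ee"
proof -
  obtain q where q: "is_ncpoly q" "t = abs_cq q" using A_surj by blast
  have "ee * t = (\<Sum>w\<in>{w. q w \<noteq> 0}. ee * (cc (q w) * abs_cq (mono w)))"
    unfolding q(2) poly_decomp[OF q(1)] by (simp add: sum_distrib_left)
  also have "\<dots> = (\<Sum>w\<in>{w. q w \<noteq> 0}. (cc (q w) * abs_cq (mono w)) * ee)"
    by (rule sum.cong) (auto, metis mult.assoc cc_comm ee_mono)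
  also have "\<dots> = t * ee"
    unfolding q(2) poly_decomp[OF q(1)] by (simp add: sum_distrib_right)
  finally show ?thesis .
qed

lemma ee_pow_central: "ee ^ m * t = t * ee ^ m"
  by (simp add: ee_central power_commuting_commutes)

lemma pow_lemma:
  fixes a b s :: "'a::ring_1"
  assumes aa: "a * a = 0" and bb: "b * b = 0" and sa: "s * a = a * s" and sb: "s * b = b * s"
  shows "(a * b + s * (b * a)) ^ Suc m = (a * b) ^ Suc m + s ^ Suc m * (b * a) ^ Suc m"
proof (induction m)
  case 0 then show ?case by simp
next
  case (Suc m)
  let ?k = "Suc m"
  have L1: "(a * b) ^ ?k * b = 0" by (simp add: power_Suc2 mult.assoc bb del: power_Suc)
  have L2: "(b * a) ^ ?k * a = 0" by (simp add: power_Suc2 mult.assoc aa del: power_Suc)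
  have sab: "s * (a * b) = (a * b) * s" by (metis sa sb mult.assoc)
  have sba: "s * (b * a) = (b * a) * s" by (metis sa sb mult.assoc)
  have c1: "(a * b) ^ ?k * s = s * (a * b) ^ ?k" using sab power_commuting_commutes by metis
  have c2: "(b * a) ^ ?k * s = s * (b * a) ^ ?k" using sba power_commuting_commutes by metis
  have T2: "(a * b) ^ ?k * (s * (b * a)) = 0"
    by (metis c1 L1 mult.assoc mult_zero_left mult_zero_right)
  have T3: "s ^ ?k * (b * a) ^ ?k * (a * b) = 0"
    by (metis L2 mult.assoc mult_zero_left mult_zero_right)
  have T4: "s ^ ?k * (b * a) ^ ?k * (s * (b * a)) = s ^ Suc ?k * (b * a) ^ Suc ?k"
  proof -
    have "s ^ ?k * (b * a) ^ ?k * (s * (b * a)) = s ^ ?k * ((b * a) ^ ?k * s) * (b * a)"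
      by (simp only: mult.assoc)
    also have "\<dots> = s ^ ?k * (s * (b * a) ^ ?k) * (b * a)" by (simp only: c2)
    also have "\<dots> = s ^ ?k * s * ((b * a) ^ ?k * (b * a))" by (simp only: mult.assoc)
    finally show ?thesis by (simp only: power_Suc2)
  qed
  have "(a * b + s * (b * a)) ^ Suc ?k = (a * b + s * (b * a)) ^ ?k * (a * b + s * (b * a))"
    by (simp only: power_Suc2)
  also have "\<dots> = ((a * b) ^ ?k + s ^ ?k * (b * a) ^ ?k) * (a * b + s * (b * a))"
    using Suc by simp
  also have "\<dots> = (a * b) ^ ?k * (a * b) + (a * b) ^ ?k * (s * (b * a))
     + s ^ ?k * (b * a) ^ ?k * (a * b) + s ^ ?k * (b * a) ^ ?k * (s * (b * a))"
    by (simp add: distrib_left distrib_right add.assoc)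
  also have "\<dots> = (a * b) ^ Suc ?k + s ^ Suc ?k * (b * a) ^ Suc ?k"
    by (simp only: T2 T3 T4 power_Suc2[symmetric]) simp
  finally show ?case .
qed


definition sing :: "nat \<Rightarrow> ncpoly \<Rightarrow> smash" where
  "sing a p = (\<lambda>k. if k = a then p else ncp_zero)"

lemma sigma_zero[simp]: "sigma_pow lam i (\<lambda>w. 0) = (\<lambda>w. 0)"
  unfolding sigma_pow_def by simp
lemma sigma_0[simp]: "sigma_pow lam 0 p = p"
  unfolding sigma_pow_def by simp

lemma sm_mul_sing:
  assumes "a < n" "b < n"
  shows "sm_mul n lam (sing a p) (sing b q) = sing ((a + b) mod n) (ncp_mul p (sigma_pow lam a q))"
proof (rule ext)
  fix k
  show "sm_mul n lam (sing a p) (sing b q) k = sing ((a + b) mod n) (ncp_mul p (sigma_pow lam a q)) k"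
  proof (cases "k < n")
    case False
    have "(a + b) mod n < n" using assms by simp
    then show ?thesis using False unfolding sm_mul_def sing_def by auto
  next
    case True
    have inner: "(\<Sum>j\<in>{j. j < n \<and> (i + j) mod n = k}.
              ncp_mul (sing a p i) (sigma_pow lam i (sing b q j)) w) =
          (if i = a \<and> (a + b) mod n = k then ncp_mul p (sigma_pow lam a q) w else 0)" for i w
    proof (cases "i = a")
      case False then show ?thesis by (simp add: sing_def ncp_zero_def)
    next
      case ia: True
      have "(\<Sum>j\<in>{j. j < n \<and> (i + j) mod n = k}.
              ncp_mul (sing a p i) (sigma_pow lam i (sing b q j)) w) =
            (\<Sum>j\<in>{j. j < n \<and> (i + j) mod n = k}. if j = b then ncp_mul p (sigma_pow lam a q) w else 0)"
        by (rule sum.cong) (auto simp: sing_def ncp_zero_def ia)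
      also have "\<dots> = (if (a + b) mod n = k then ncp_mul p (sigma_pow lam a q) w else 0)"
        using assms by (simp add: sum.delta' ia)
      finally show ?thesis using ia by simp
    qed
    show ?thesis using True assms
      apply (simp only: sm_mul_def inner if_True)
      by (simp add: sum.delta' sing_def fun_eq_iff ncp_zero_def)
  qed
qed

definition bal :: "ncpoly \<Rightarrow> bool" where
  "bal p \<longleftrightarrow> (\<forall>w. p w \<noteq> 0 \<longrightarrow> count_list w Z = count_list w X)"

lemma sigma_bal: "bal p \<Longrightarrow> sigma_pow lam i p = p"
  unfolding sigma_pow_def bal_def by (rule ext) (metis diff_self mult_zero_right mult_cancel_right2 power_int_0_right)

lemma bal_mul: "bal p \<Longrightarrow> bal q \<Longrightarrow> bal (ncp_mul p q)"
  unfolding bal_def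
proof (intro allI impI)
  fix w assume p: "\<forall>w. p w \<noteq> 0 \<longrightarrow> count_list w Z = count_list w X"
    and q: "\<forall>w. q w \<noteq> 0 \<longrightarrow> count_list w Z = count_list w X" and "ncp_mul p q w \<noteq> 0"
  then obtain k where "p (take k w) \<noteq> 0" "q (drop k w) \<noteq> 0" using mul_ne0 by blast
  then have "count_list (take k w) Z = count_list (take k w) X"
     "count_list (drop k w) Z = count_list (drop k w) X" using p q by auto
  then show "count_list w Z = count_list w X"
    by (metis append_take_drop_id count_list_append)
qed
lemma bal_one: "bal ncp_one" unfolding bal_def ncp_one_def by simp


lemma x'_sing: "x' = sing 0 (ncp_var X)" unfolding x'_def sing_def by auto
lemma z'_sing: "z' n = sing (n - 1) (ncp_var Z)" unfolding z'_def sing_def by auto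
lemma sm_add_sing: "sm_add (sing a p) (sing a q) = sing a (ncp_add p q)"
  unfolding sm_add_def sing_def ncp_add_def ncp_zero_def by auto
lemma sm_one_sing: "sm_one = sing 0 ncp_one" unfolding sm_one_def sing_def by auto

primrec upow :: "ncpoly \<Rightarrow> nat \<Rightarrow> ncpoly" where
  "upow u 0 = ncp_one"
| "upow u (Suc m) = ncp_mul (upow u m) u"

lemma sm_pow_sing:
  assumes n: "n > 0" and bu: "bal u"
  shows "sm_pow n lam (sing (n - 1) u) m = sing ((m * (n - 1)) mod n) (upow u m)"
proof (induction m)
  case 0 then show ?case by (simp add: sm_one_sing)
next
  case (Suc m)
  have "sm_pow n lam (sing (n - 1) u) (Suc m) =
        sing (((m * (n - 1)) mod n + (n - 1)) mod n) (ncp_mul (upow u m) (sigma_pow lam ((m * (n - 1)) mod n) u))"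
    unfolding sm_pow.simps Suc using n by (intro sm_mul_sing) auto
  also have "\<dots> = sing ((Suc m * (n - 1)) mod n) (upow u (Suc m))"
    by (simp add: sigma_bal[OF bu] mod_add_left_eq add.commute mod_add_right_eq)
  finally show ?case .
qed

lemma fin_upow: "is_ncpoly u \<Longrightarrow> is_ncpoly (upow u m)"
  by (induction m) (simp_all add: fin_one fin_mul)
lemma bal_upow: "bal u \<Longrightarrow> bal (upow u m)"
  by (induction m) (simp_all add: bal_one bal_mul)
lemma A_upow: "is_ncpoly u \<Longrightarrow> abs_cq (upow u m) = abs_cq u ^ m"
  by (induction m) (simp_all add: fin_upow A_mul power_commutes flip: one_cq.abs_eq)

lemma sm_mul_sing0_left:
  assumes "k < n"
  shows "sm_mul n lam (sing 0 c) Q k = ncp_mul c (Q k)"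
proof (rule ext)
  fix w
  have inner: "(\<Sum>j\<in>{j. j < n \<and> (i + j) mod n = k}. ncp_mul (sing 0 c i) (sigma_pow lam i (Q j)) w)
     = (if i = 0 then ncp_mul c (Q k) w else 0)" for i
  proof (cases "i = 0")
    case False then show ?thesis by (simp add: sing_def ncp_zero_def)
  next
    case True
    have "{j. j < n \<and> (i + j) mod n = k} = {k}" using True assms by auto
    then show ?thesis using True by (simp add: sing_def)
  qed
  show "sm_mul n lam (sing 0 c) Q k w = ncp_mul c (Q k) w"
    using assms apply (simp only: sm_mul_def inner if_True)
    by simp
qed

lemma sm_mul_sing0_right:
  assumes "k < n" and "bal c"
  shows "sm_mul n lam Q (sing 0 c) k = ncp_mul (Q k) c"
proof (rule ext)
  fix w
  have inner: "i < n \<Longrightarrow> (\<Sum>j\<in>{j. j < n \<and> (i + j) mod n = k}. ncp_mul (Q i) (sigma_pow lam i (sing 0 c j)) w)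
     = (if i = k then ncp_mul (Q k) c w else 0)" for i
  proof -
    assume i: "i < n"
    have "(\<Sum>j\<in>{j. j < n \<and> (i + j) mod n = k}. ncp_mul (Q i) (sigma_pow lam i (sing 0 c j)) w)
       = (\<Sum>j\<in>{j. j < n \<and> (i + j) mod n = k}. if j = 0 then ncp_mul (Q i) c w else 0)"
      by (rule sum.cong) (auto simp: sing_def ncp_zero_def sigma_bal[OF assms(2)])
    also have "\<dots> = (if i = k then ncp_mul (Q k) c w else 0)"
      using i assms by (simp add: sum.delta')
    finally show ?thesis .
  qed
  have "sm_mul n lam Q (sing 0 c) k w = (\<Sum>i<n. if i = k then ncp_mul (Q k) c w else 0)"
    using assms unfolding sm_mul_def by (simp add: inner)
  then show "sm_mul n lam Q (sing 0 c) k w = ncp_mul (Q k) c w" using assms by simp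
qed


theorem mainTheorem17:
  fixes n :: nat and lam :: complex
  assumes "n > 0" and "lam ^ n = 1" and "\<forall>k. 0 < k \<and> k < n \<longrightarrow> lam ^ k \<noteq> 1"
  shows "sm_center n lam
           (sm_pow n lam (sm_add (sm_mul n lam x' (z' n)) (sm_mul n lam (z' n) x')) n)"
proof -
  note n = assms(1)
  have sX: "sigma_pow lam (n - 1) (ncp_var X) = (\<lambda>w. lam * ncp_var X w)"
  proof (rule ext)
    fix w
    have li: "inverse (lam ^ (n - 1)) = lam"
    proof -
      have "lam ^ (n - 1) * lam = lam ^ Suc (n - 1)" by (simp only: power_Suc2)
      also have "Suc (n - 1) = n" using assms(1) by simp
      finally have "lam ^ (n - 1) * lam = 1" using assms(2) by simp
      then show ?thesis by (metis inverse_unique)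
    qed
    show "sigma_pow lam (n - 1) (ncp_var X) w = lam * ncp_var X w"
      unfolding sigma_pow_def ncp_var_def using li by (simp add: power_int_minus)
  qed
  define u where "u = ncp_add (ncp_mul (ncp_var X) (sigma_pow lam 0 (ncp_var Z)))
                              (ncp_mul (ncp_var Z) (sigma_pow lam (n - 1) (ncp_var X)))"
  have hA: "sm_add (sm_mul n lam x' (z' n)) (sm_mul n lam (z' n) x') = sing (n - 1) u"
    unfolding x'_sing z'_sing using n by (simp add: sm_mul_sing sm_add_sing u_def)
  have u_eq: "u = (\<lambda>w. ncp_mul (ncp_var X) (ncp_var Z) w + lam * ncp_mul (ncp_var Z) (ncp_var X) w)"
    unfolding u_def ncp_add_def sX sigma_0 by (rule ext) (rule arg_cong[where f="\<lambda>t. _ + t"], rule mul_scal_right)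
  have fu: "is_ncpoly u" unfolding u_eq by (intro fin_add fin_scal fin_mul fin_var)
  have bu: "bal u"
    unfolding bal_def u_eq
  proof (intro allI impI)
    fix w assume ne: "ncp_mul (ncp_var X) (ncp_var Z) w + lam * ncp_mul (ncp_var Z) (ncp_var X) w \<noteq> 0"
    show "count_list w Z = count_list w X"
    proof (cases w)
      case Nil then show ?thesis by simp
    next
      case (Cons b v)
      show ?thesis
      proof (cases b)
        case X
        then have "ncp_var Z v \<noteq> 0" using ne Cons by (simp add: mul_var_left)
        then have "v = [Z]" by (simp add: ncp_var_def split: if_splits)
        then show ?thesis using Cons X by simp
      next
        case Y
        then show ?thesis using ne Cons by (simp add: mul_var_left)
      next
        case Z
        then have "ncp_var X v \<noteq> 0" using ne Cons by (simp add: mul_var_left)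
        then have "v = [X]" by (simp add: ncp_var_def split: if_splits)
        then show ?thesis using Cons Z by simp
      qed
    qed
  qed
  have Au: "abs_cq u = gx * gz + cc lam * (gz * gx)"
    unfolding u_eq gx_def gz_def
    by (simp add: A_add A_scal A_mul fin_mul fin_var fin_scal)
  obtain m where m: "n = Suc m" using n by (metis Suc_pred)
  have cz: "cc lam * gz = gz * cc lam" "cc lam * gx = gx * cc lam" by (simp_all add: cc_comm)
  have "abs_cq u ^ n = (gx * gz) ^ n + (gz * gx) ^ n"
    unfolding Au m using pow_lemma[OF gxx gzz cz(2) cz(1), of m] assms(2) m
    by (simp add: cc_pow cc_one del: power_Suc)
  also have "\<dots> = ee ^ n"
    unfolding ee_def m using pow_lemma[of gx gz 1 m] gxx gzz by simp
  finally have Aun: "abs_cq (upow u n) = ee ^ n" using A_upow[OF fu] by simp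
  have W: "sm_pow n lam (sm_add (sm_mul n lam x' (z' n)) (sm_mul n lam (z' n) x')) n = sing 0 (upow u n)"
    unfolding hA sm_pow_sing[OF n bu] by simp
  show ?thesis unfolding W sm_center_def sm_eq_def
  proof (intro allI impI)
    fix Q k assume Q: "sm_elem n Q" and k: "k < n"
    have fq: "is_ncpoly (Q k)" using Q unfolding sm_elem_def by simp
    have fc: "is_ncpoly (upow u n)" by (rule fin_upow[OF fu])
    have "abs_cq (ncp_mul (upow u n) (Q k)) = abs_cq (ncp_mul (Q k) (upow u n))"
      using A_mul fq fc Aun ee_pow_central by metis
    then show "ncp_diff (sm_mul n lam (sing 0 (upow u n)) Q k) (sm_mul n lam Q (sing 0 (upow u n)) k) \<in> C_ideal"
      unfolding sm_mul_sing0_left[OF k] sm_mul_sing0_right[OF k bal_upow[OF bu]]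
      using A_eq_iff fin_mul fq fc by metis
  qed
qed

end
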